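(* For all integers $m\ge 2$ and $f$ with $0\le f\le \binom{m}{2}$ there exists a constant $c>0$ such that $h_2(n,m,f) > c\, n^{1/(m-1)}$ for all $n\ge 1$. That is, every $n$-vertex graph $G$ that contains no induced subgraph with exactly $m$ vertices and exactly $f$ edges has a clique or an independent set of size greater than $c\,n^{1/(m-1)}$.
   Context: For an $r$-uniform hypergraph ($r$-graph) $H$, a homogeneous set is a set of vertices that is either a clique (every $r$-subset is an edge) or a coclique (no $r$-subset is an edge); $h(H)$ denotes the size of a largest homogeneous set. An $(m,f)$-graph is an $r$-graph with $m$ vertices and $f$ edges; $H$ is $(m,f)$-free if it contains no induced sub-hypergraph that is an $(m,f)$-graph. For a set $Q$ of pairs $(m,f)$, $H$ is $Q$-free if it is $(m,f)$-free for every $(m,f)\in Q$. $h_r(n,Q)$ is the minimum of $h(H)$ over all $n$-vertex $Q$-free $r$-graphs $H$, and $h_r(n,m,f)=h_r(n,\{(m,f)\})$. A 2-graph is a graph. *)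

theory Defs
  imports "HOL-Analysis.Analysis"
begin

definition rgraph :: "nat \<Rightarrow> 'a set \<Rightarrow> 'a set set \<Rightarrow> bool" where
  "rgraph r V E \<longleftrightarrow> finite V \<and> (\<forall>e\<in>E. e \<subseteq> V \<and> card e = r)"

definition homogeneous :: "nat \<Rightarrow> 'a set \<Rightarrow> 'a set set \<Rightarrow> 'a set \<Rightarrow> bool" where
  "homogeneous r V E S \<longleftrightarrow> S \<subseteq> V \<and>
     ((\<forall>e. e \<subseteq> S \<and> card e = r \<longrightarrow> e \<in> E) \<or> (\<forall>e. e \<subseteq> S \<and> card e = r \<longrightarrow> e \<notin> E))"

definition hom_number :: "nat \<Rightarrow> 'a set \<Rightarrow> 'a set set \<Rightarrow> nat" where
  "hom_number r V E = Max {card S | S. homogeneous r V E S}"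

definition has_induced :: "'a set \<Rightarrow> 'a set set \<Rightarrow> nat \<Rightarrow> nat \<Rightarrow> bool" where
  "has_induced V E m f \<longleftrightarrow> (\<exists>S. S \<subseteq> V \<and> card S = m \<and> card {e\<in>E. e \<subseteq> S} = f)"

definition mf_free :: "'a set \<Rightarrow> 'a set set \<Rightarrow> nat \<Rightarrow> nat \<Rightarrow> bool" where
  "mf_free V E m f \<longleftrightarrow> \<not> has_induced V E m f"

definition Q_free :: "'a set \<Rightarrow> 'a set set \<Rightarrow> (nat \<times> nat) set \<Rightarrow> bool" where
  "Q_free V E Q \<longleftrightarrow> (\<forall>(m,f)\<in>Q. mf_free V E m f)"

text \<open>h_r(n,Q): minimum of h(H) over all n-vertex Q-free r-graphs H. Every n-vertex
  r-graph is isomorphic to one on the vertex set {0..<n}, so we range over those.\<close>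
definition h_rQ :: "nat \<Rightarrow> nat \<Rightarrow> (nat \<times> nat) set \<Rightarrow> nat" where
  "h_rQ r n Q = Min {hom_number r {0..<n} E | E. rgraph r {0..<n} E \<and> Q_free {0..<n} E Q}"

definition h_rmf :: "nat \<Rightarrow> nat \<Rightarrow> nat \<Rightarrow> nat \<Rightarrow> nat" where
  "h_rmf r n m f = h_rQ r n {(m, f)}"

end

theory Submission
  imports Defs
begin

definition phom :: "'a set set \<Rightarrow> 'a set \<Rightarrow> bool" where
  "phom E S \<longleftrightarrow> (\<forall>x\<in>S. \<forall>y\<in>S. x \<noteq> y \<longrightarrow> {x,y} \<in> E) \<or> (\<forall>x\<in>S. \<forall>y\<in>S. x \<noteq> y \<longrightarrow> {x,y} \<notin> E)"

lemma card2_mem: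
  assumes "card e = 2" "v \<in> e"
  shows "\<exists>x. x \<noteq> v \<and> e = {v,x}"
  using assms by (auto simp: card_2_iff)

lemma greedy:
  fixes R :: "'a \<Rightarrow> 'a \<Rightarrow> bool"
  assumes "finite V" "\<And>x y. R x y = R y x"
    "\<forall>v\<in>V. card {x\<in>V. x\<noteq>v \<and> R v x} \<le> D" "k*(D+1) \<le> card V"
  shows "\<exists>I\<subseteq>V. card I = k \<and> (\<forall>x\<in>I. \<forall>y\<in>I. x\<noteq>y \<longrightarrow> \<not> R x y)"
  using assms(1,3,4)
proof (induction k arbitrary: V)
  case 0
  then show ?case by (intro exI[of _ "{}"]) auto
next
  case (Suc k)
  then have "card V > 0" by simp
  then obtain v where v: "v \<in> V" using Suc.prems(1) card_gt_0_iff by fastforce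
  define A where "A = insert v {x\<in>V. x\<noteq>v \<and> R v x}"
  define W where "W = V - A"
  have AV: "A \<subseteq> V" using v by (auto simp: A_def)
  have "card A \<le> Suc (card {x\<in>V. x\<noteq>v \<and> R v x})"
    unfolding A_def by (rule card_insert_le_m1) auto
  hence cA: "card A \<le> D + 1" using Suc.prems(2) v by auto
  have cW: "card W = card V - card A" unfolding W_def
    using AV Suc.prems(1) by (meson card_Diff_subset finite_subset)
  have fW: "finite W" using Suc.prems(1) W_def by auto
  have "k*(D+1) \<le> card W" using cW cA Suc.prems(3) by (simp add: algebra_simps)
  moreover have "\<forall>u\<in>W. card {x\<in>W. x\<noteq>u \<and> R u x} \<le> D"
  proof
    fix u assume "u \<in> W"
    hence "u \<in> V" by (auto simp: W_def)
    have "card {x\<in>W. x\<noteq>u \<and> R u x} \<le> card {x\<in>V. x\<noteq>u \<and> R u x}"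
      by (rule card_mono) (auto simp: W_def Suc.prems(1))
    thus "card {x\<in>W. x\<noteq>u \<and> R u x} \<le> D" using Suc.prems(2) \<open>u\<in>V\<close> by fastforce
  qed
  ultimately obtain I where I: "I \<subseteq> W" "card I = k" "\<forall>x\<in>I. \<forall>y\<in>I. x\<noteq>y \<longrightarrow> \<not> R x y"
    using Suc.IH fW by blast
  have vI: "v \<notin> I" using I(1) by (auto simp: W_def A_def)
  have fI: "finite I" using I(1) fW finite_subset by blast
  have nR: "\<forall>y\<in>I. \<not> R v y" using I(1) by (auto simp: W_def A_def)
  show ?case
  proof (intro exI[of _ "insert v I"] conjI)
    show "insert v I \<subseteq> V" using I(1) v by (auto simp: W_def)
    show "card (insert v I) = Suc k" using vI fI I(2) by simp
    show "\<forall>x\<in>insert v I. \<forall>y\<in>insert v I. x \<noteq> y \<longrightarrow> \<not> R x y"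
      using I(3) nR assms(2) by auto
  qed
qed


lemma count_nbr:
  assumes E2: "\<forall>e\<in>E. card e = 2" and vS: "v \<notin> S" and fS: "finite S"
    and nb: "\<forall>x\<in>S. {v,x} \<in> E"
  shows "card {e\<in>E. e \<subseteq> insert v S} = card {e\<in>E. e \<subseteq> S} + card S"
proof -
  have eq: "{e\<in>E. e \<subseteq> insert v S} = {e\<in>E. e \<subseteq> S} \<union> (\<lambda>x. {v,x}) ` S"
  proof (intro equalityI subsetI)
    fix e assume "e \<in> {e\<in>E. e \<subseteq> insert v S}"
    hence e: "e \<in> E" "e \<subseteq> insert v S" by auto
    show "e \<in> {e\<in>E. e \<subseteq> S} \<union> (\<lambda>x. {v,x}) ` S"
    proof (cases "v \<in> e")
      case True
      then obtain x where "x \<noteq> v" "e = {v,x}" using card2_mem[of e v] E2 e(1) True by blast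
      then show ?thesis using e by auto
    next
      case False then show ?thesis using e by auto
    qed
  qed (use nb vS in auto)
  have disj: "{e\<in>E. e \<subseteq> S} \<inter> (\<lambda>x. {v,x}) ` S = {}" using vS by auto
  have inj: "inj_on (\<lambda>x. {v,x}) S" using vS by (auto simp: inj_on_def doubleton_eq_iff)
  have fin: "finite {e\<in>E. e \<subseteq> S}" by (rule finite_subset[of _ "Pow S"]) (auto simp: fS)
  show ?thesis unfolding eq using disj fin fS card_image[OF inj]
    by (simp add: card_Un_disjoint)
qed

lemma count_nonnbr:
  assumes E2: "\<forall>e\<in>E. card e = 2"
    and nb: "\<forall>x\<in>S. {v,x} \<notin> E"
  shows "{e\<in>E. e \<subseteq> insert v S} = {e\<in>E. e \<subseteq> S}"
proof (intro equalityI subsetI)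
  fix e assume "e \<in> {e\<in>E. e \<subseteq> insert v S}"
  hence e: "e \<in> E" "e \<subseteq> insert v S" by auto
  show "e \<in> {e\<in>E. e \<subseteq> S}"
  proof (cases "v \<in> e")
    case True
    then obtain x where x: "x \<noteq> v" "e = {v,x}" using card2_mem[of e v] E2 e(1) True by blast
    hence "x \<in> S" using e(2) by simp
    hence "{v,x} \<notin> E" using nb by blast
    hence False using x(2) e(1) by simp
    then show ?thesis ..
  next
    case False then show ?thesis using e by blast
  qed
qed blast

lemma count_pair:
  assumes E2: "\<forall>e\<in>E. card e = 2" and "x \<noteq> y"
  shows "{e\<in>E. e \<subseteq> {x,y}} = (if {x,y} \<in> E then {{x,y}} else {})"
proof -
  have "e = {x,y}" if "e \<in> E" "e \<subseteq> {x,y}" for e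
  proof -
    have "card {x,y} = 2" using assms(2) by simp
    moreover have "card e = 2" using that E2 by blast
    ultimately show "e = {x,y}" using card_subset_eq[of "{x,y}" e] that(2) by simp
  qed
  thus ?thesis by auto
qed

lemma ch: "Suc m choose 2 = m + (m choose 2)"
  using binomial_Suc_Suc[of m 1] by (simp only: Suc_1 choose_one)
lemma m1: "2 \<le> m \<Longrightarrow> m - 1 \<le> m choose 2"
proof -
  assume "2 \<le> m"
  have "2*(m-1) \<le> m*(m-1)" using \<open>2 \<le> m\<close> by (intro mult_le_mono1) simp
  hence "2*(m-1) div 2 \<le> m*(m-1) div 2" by (rule div_le_mono)
  thus ?thesis by (simp add: choose_two)
qed
lemma tm: "2 \<le> m \<Longrightarrow> (t::nat)^m = t * t^(m-1)"
  by (cases m) auto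

lemma core:
  assumes E2: "\<forall>e\<in>E. card e = 2" and "2 \<le> m"
  shows "\<forall>f V t. f \<le> m choose 2 \<longrightarrow> finite V \<longrightarrow> 1 \<le> t \<longrightarrow> t^(m-1) \<le> card V \<longrightarrow>
     \<not>(\<exists>S\<subseteq>V. card S = m \<and> card {e\<in>E. e \<subseteq> S} = f) \<longrightarrow>
     (\<exists>S\<subseteq>V. card S = t \<and> phom E S)"
  using assms(2)
proof (induction m rule: nat_induct_at_least)
  case base
  show ?case
  proof (intro allI impI)
    fix f V and t :: nat
    assume f: "f \<le> 2 choose 2" and fV: "finite V" and t: "1 \<le> t" "t^(2-1) \<le> card V"
      and nf: "\<not>(\<exists>S\<subseteq>V. card S = 2 \<and> card {e\<in>E. e \<subseteq> S} = f)"
    have "t \<le> card V" using t(2) by simp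
    then obtain T where T: "T \<subseteq> V" "card T = t" by (metis obtain_subset_with_card_n)
    have "phom E T"
    proof (cases "f = 0")
      case True
      have "{x,y} \<in> E" if "x \<in> T" "y \<in> T" "x \<noteq> y" for x y
      proof -
        have "{x,y} \<subseteq> V" "card {x,y} = 2" using that T(1) by auto
        hence "card {e\<in>E. e \<subseteq> {x,y}} \<noteq> f" using nf by blast
        hence "card {e\<in>E. e \<subseteq> {x,y}} \<noteq> 0" using True by simp
        thus ?thesis using count_pair[OF E2 \<open>x\<noteq>y\<close>] by (auto split: if_splits)
      qed
      thus ?thesis unfolding phom_def by blast
    next
      case False
      hence f1: "f = 1" using f by simp
      have "{x,y} \<notin> E" if "x \<in> T" "y \<in> T" "x \<noteq> y" for x y
      proof -
        have "{x,y} \<subseteq> V" "card {x,y} = 2" using that T(1) by auto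
        hence "card {e\<in>E. e \<subseteq> {x,y}} \<noteq> f" using nf by blast
        hence "card {e\<in>E. e \<subseteq> {x,y}} \<noteq> 1" using f1 by simp
        thus ?thesis using count_pair[OF E2 \<open>x\<noteq>y\<close>] by (auto split: if_splits)
      qed
      thus ?thesis unfolding phom_def by blast
    qed
    thus "\<exists>S\<subseteq>V. card S = t \<and> phom E S" using T by blast
  qed
next
  case (Suc m)
  show ?case
  proof (intro allI impI)
    fix f V and t :: nat
    assume f: "f \<le> Suc m choose 2" and fV: "finite V" and t: "1 \<le> t" "t^(Suc m-1) \<le> card V"
      and nf: "\<not>(\<exists>S\<subseteq>V. card S = Suc m \<and> card {e\<in>E. e \<subseteq> S} = f)"
    have ch: "Suc m choose 2 = m + (m choose 2)" by (rule ch)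
    have m1: "m - 1 \<le> m choose 2" using Suc.hyps by (rule m1)
    have tm: "t^m = t * t^(m-1)" using Suc.hyps by (rule tm)
    show "\<exists>S\<subseteq>V. card S = t \<and> phom E S"
    proof (cases "m \<le> f")
      case True
      define N where "N v = {x\<in>V. x\<noteq>v \<and> {v,x} \<in> E}" for v
      show ?thesis
      proof (cases "\<exists>v\<in>V. t^(m-1) \<le> card (N v)")
        case True
        then obtain v where v: "v \<in> V" "t^(m-1) \<le> card (N v)" by blast
        have free: "\<not>(\<exists>S\<subseteq>N v. card S = m \<and> card {e\<in>E. e \<subseteq> S} = f - m)"
        proof
          assume "\<exists>S\<subseteq>N v. card S = m \<and> card {e\<in>E. e \<subseteq> S} = f - m"
          then obtain S where S: "S \<subseteq> N v" "card S = m" "card {e\<in>E. e \<subseteq> S} = f - m" by blast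
          have fS: "finite S" using S(2) Suc.hyps card.infinite by fastforce
          have vS: "v \<notin> S" using S(1) by (auto simp: N_def)
          have "card {e\<in>E. e \<subseteq> insert v S} = f"
          proof -
            have nbS: "\<forall>x\<in>S. {v,x} \<in> E" using S(1) by (auto simp: N_def)
            have "card {e\<in>E. e \<subseteq> insert v S} = (f - m) + m"
              using count_nbr[OF E2 vS fS nbS] S(2,3) by simp
            thus ?thesis using \<open>m \<le> f\<close> by simp
          qed
          moreover have "insert v S \<subseteq> V" "card (insert v S) = Suc m"
            using S v vS fS by (auto simp: N_def)
          ultimately show False using nf by blast
        qed
        have "f - m \<le> m choose 2" using f ch by simp
        moreover have "finite (N v)" using fV by (auto simp: N_def)
        ultimately obtain S where "S \<subseteq> N v" "card S = t" "phom E S"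
          using Suc.IH free t(1) v(2) by blast
        thus ?thesis by (auto simp: N_def)
      next
        case False
        have "\<exists>I\<subseteq>V. card I = t \<and> (\<forall>x\<in>I. \<forall>y\<in>I. x\<noteq>y \<longrightarrow> \<not> {x,y} \<in> E)"
        proof (rule greedy[where D = "t^(m-1) - 1" and R = "\<lambda>x y. {x,y} \<in> E"])
          show "\<forall>v\<in>V. card {x\<in>V. x\<noteq>v \<and> {v,x} \<in> E} \<le> t^(m-1) - 1"
            using False by (auto simp: N_def)
          have "1 \<le> t^(m-1)" using t(1) by simp
          thus "t * (t^(m-1) - 1 + 1) \<le> card V" using t tm by simp
          show "finite V" by (rule fV)
        qed (simp_all add: insert_commute)
        thus ?thesis unfolding phom_def by blast
      qed
    next
      case False
      define M where "M v = {x\<in>V. x\<noteq>v \<and> {v,x} \<notin> E}" for v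
      show ?thesis
      proof (cases "\<exists>v\<in>V. t^(m-1) \<le> card (M v)")
        case True
        then obtain v where v: "v \<in> V" "t^(m-1) \<le> card (M v)" by blast
        have free: "\<not>(\<exists>S\<subseteq>M v. card S = m \<and> card {e\<in>E. e \<subseteq> S} = f)"
        proof
          assume "\<exists>S\<subseteq>M v. card S = m \<and> card {e\<in>E. e \<subseteq> S} = f"
          then obtain S where S: "S \<subseteq> M v" "card S = m" "card {e\<in>E. e \<subseteq> S} = f" by blast
          have fS: "finite S" using S(2) Suc.hyps card.infinite by fastforce
          have vS: "v \<notin> S" using S(1) by (auto simp: M_def)
          have "card {e\<in>E. e \<subseteq> insert v S} = f"
          proof -
            have "\<forall>x\<in>S. {v,x} \<notin> E" using S(1) by (auto simp: M_def)
            thus ?thesis using count_nonnbr[OF E2, of S v] S(3) by simp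
          qed
          moreover have "insert v S \<subseteq> V" "card (insert v S) = Suc m"
            using S v vS fS by (auto simp: M_def)
          ultimately show False using nf by blast
        qed
        have "f \<le> m choose 2" using False m1 by linarith
        moreover have "finite (M v)" using fV by (auto simp: M_def)
        ultimately obtain S where "S \<subseteq> M v" "card S = t" "phom E S"
          using Suc.IH free t(1) v(2) by blast
        thus ?thesis by (auto simp: M_def)
      next
        case False
        have "\<exists>I\<subseteq>V. card I = t \<and> (\<forall>x\<in>I. \<forall>y\<in>I. x\<noteq>y \<longrightarrow> \<not> {x,y} \<notin> E)"
        proof (rule greedy[where D = "t^(m-1) - 1" and R = "\<lambda>x y. \<not> {x,y} \<in> E"])
          show "\<forall>v\<in>V. card {x\<in>V. x\<noteq>v \<and> {v,x} \<notin> E} \<le> t^(m-1) - 1"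
            using False by (auto simp: M_def)
          have "1 \<le> t^(m-1)" using t(1) by simp
          thus "t * (t^(m-1) - 1 + 1) \<le> card V" using t tm by simp
          show "finite V" by (rule fV)
        qed (simp_all add: insert_commute)
        thus ?thesis unfolding phom_def by blast
      qed
    qed
  qed
qed

lemma pairs2: "e \<subseteq> S \<Longrightarrow> card e = 2 \<Longrightarrow> \<exists>x\<in>S. \<exists>y\<in>S. x\<noteq>y \<and> e = {x,y}"
proof -
  assume a: "e \<subseteq> S" "card e = 2"
  then obtain x y where "e = {x,y}" "x \<noteq> y" unfolding card_2_iff by blast
  thus ?thesis using a(1) by blast
qed

lemma phom_homog:
  assumes "S \<subseteq> V" "phom E S"
  shows "homogeneous 2 V E S"
  using assms(2) unfolding phom_def homogeneous_def
proof (elim disjE)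
  assume h: "\<forall>x\<in>S. \<forall>y\<in>S. x \<noteq> y \<longrightarrow> {x,y} \<in> E"
  have "\<forall>e. e \<subseteq> S \<and> card e = 2 \<longrightarrow> e \<in> E"
  proof (intro allI impI)
    fix e assume "e \<subseteq> S \<and> card e = 2"
    then obtain x y where "x\<in>S" "y\<in>S" "x\<noteq>y" "e = {x,y}" using pairs2[of e S] by blast
    thus "e \<in> E" using h by blast
  qed
  thus "S \<subseteq> V \<and> ((\<forall>e. e \<subseteq> S \<and> card e = 2 \<longrightarrow> e \<in> E) \<or> (\<forall>e. e \<subseteq> S \<and> card e = 2 \<longrightarrow> e \<notin> E))"
    using assms(1) by blast
next
  assume h: "\<forall>x\<in>S. \<forall>y\<in>S. x \<noteq> y \<longrightarrow> {x,y} \<notin> E"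
  have "\<forall>e. e \<subseteq> S \<and> card e = 2 \<longrightarrow> e \<notin> E"
  proof (intro allI impI)
    fix e assume "e \<subseteq> S \<and> card e = 2"
    then obtain x y where "x\<in>S" "y\<in>S" "x\<noteq>y" "e = {x,y}" using pairs2[of e S] by blast
    thus "e \<notin> E" using h by blast
  qed
  thus "S \<subseteq> V \<and> ((\<forall>e. e \<subseteq> S \<and> card e = 2 \<longrightarrow> e \<in> E) \<or> (\<forall>e. e \<subseteq> S \<and> card e = 2 \<longrightarrow> e \<notin> E))"
    using assms(1) by blast
qed

lemma hom_ge:
  assumes "finite V" "S \<subseteq> V" "phom E S"
  shows "card S \<le> hom_number 2 V E"
proof -
  have fin: "finite {card S | S. homogeneous 2 V E S}"
    by (rule finite_subset[of _ "card ` Pow V"]) (auto simp: homogeneous_def assms(1))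
  have "card S \<in> {card S | S. homogeneous 2 V E S}" using phom_homog[OF assms(2,3)] by blast
  thus ?thesis unfolding hom_number_def using fin by (rule Max_ge[rotated])
qed

lemma bound_all:
  assumes m2: "2 \<le> m" and t1: "1 \<le> t" and tn: "t^(m-1) \<le> n"
    and G: "rgraph 2 {0..<n} E" "Q_free {0..<n} E {(m,f)}" and fm: "f \<le> m choose 2"
  shows "t \<le> hom_number 2 {0..<n} E"
proof -
  have E2: "\<forall>e\<in>E. card e = 2" using G(1) by (auto simp: rgraph_def)
  have nf: "\<not>(\<exists>S\<subseteq>{0..<n}. card S = m \<and> card {e\<in>E. e \<subseteq> S} = f)"
    using G(2) by (simp add: Q_free_def mf_free_def has_induced_def)
  have "\<exists>S\<subseteq>{0..<n}. card S = t \<and> phom E S"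
    using core[OF E2 m2, rule_format, of f "{0..<n}" t, OF fm _ t1 _ nf] tn by simp
  then obtain S where S: "S \<subseteq> {0..<n}" "card S = t" "phom E S" by blast
  show ?thesis using hom_ge[OF _ S(1) S(3)] S(2) by simp
qed

lemma nonempty_graphs:
  assumes m2: "2 \<le> m"
  shows "\<exists>E. rgraph 2 {0..<n::nat} E \<and> Q_free {0..<n} E {(m,f)}"
proof (cases "f = 0")
  case True
  define E where "E = {e. e \<subseteq> {0..<n} \<and> card e = 2}"
  have "rgraph 2 {0..<n} E" by (auto simp: rgraph_def E_def)
  moreover have "\<not> has_induced {0..<n} E m f"
  proof
    assume "has_induced {0..<n} E m f"
    then obtain S where S: "S \<subseteq> {0..<n}" "card S = m" "card {e\<in>E. e \<subseteq> S} = 0"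
      using True by (auto simp: has_induced_def)
    have fS: "finite S" using S(1) finite_subset by blast
    have "{e\<in>E. e \<subseteq> S} = {e. e \<subseteq> S \<and> card e = 2}" using S(1) by (auto simp: E_def)
    hence "card {e\<in>E. e \<subseteq> S} = m choose 2" using n_subsets[OF fS, of 2] S(2) by simp
    thus False using S(3) m2 by simp
  qed
  ultimately show ?thesis by (auto simp: Q_free_def mf_free_def)
next
  case False
  have "rgraph 2 {0..<n} {}" by (auto simp: rgraph_def)
  moreover have "\<not> has_induced {0..<n} {} m f" using False by (auto simp: has_induced_def)
  ultimately show ?thesis by (auto simp: Q_free_def mf_free_def)
qed

lemma bound_h:
  assumes m2: "2 \<le> m" and t1: "1 \<le> t" and tn: "t^(m-1) \<le> n" and fm: "f \<le> m choose 2"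
  shows "t \<le> h_rmf 2 n m f"
proof -
  define A where "A = {hom_number 2 {0..<n} E | E. rgraph 2 {0..<n} E \<and> Q_free {0..<n} E {(m,f)}}"
  have "A \<subseteq> (\<lambda>E. hom_number 2 {0..<n} E) ` Pow (Pow {0..<n})"
  proof
    fix a assume "a \<in> A"
    then obtain E where E: "a = hom_number 2 {0..<n} E" "rgraph 2 {0..<n} E" unfolding A_def by blast
    have "E \<in> Pow (Pow {0..<n})" using E(2) unfolding rgraph_def by blast
    thus "a \<in> (\<lambda>E. hom_number 2 {0..<n} E) ` Pow (Pow {0..<n})" using E(1) by (rule rev_image_eqI)
  qed
  hence fin: "finite A" by (rule finite_subset) simp
  have ne: "A \<noteq> {}"
  proof -
    obtain E where "rgraph 2 {0..<n} E \<and> Q_free {0..<n} E {(m,f)}" using nonempty_graphs[OF m2, of n f] by blast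
    hence "hom_number 2 {0..<n} E \<in> A" unfolding A_def by blast
    thus ?thesis by blast
  qed
  have "\<forall>a\<in>A. t \<le> a"
  proof
    fix a assume "a \<in> A"
    then obtain E where E: "a = hom_number 2 {0..<n} E" "rgraph 2 {0..<n} E" "Q_free {0..<n} E {(m,f)}"
      unfolding A_def by blast
    show "t \<le> a" using bound_all[OF m2 t1 tn E(2,3) fm] E(1) by simp
  qed
  thus ?thesis using fin ne by (simp add: h_rmf_def h_rQ_def A_def[symmetric])
qed

theorem mainTheorem1:
  fixes m f :: nat
  assumes "m \<ge> 2" and "f \<le> m choose 2"
  shows "\<exists>c::real. c > 0 \<and>
           (\<forall>n::nat. n \<ge> 1 \<longrightarrow> real (h_rmf 2 n m f) > c * real n powr (1 / (real m - 1)))"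
proof (intro exI[of _ "1/2"] conjI allI impI)
  fix n :: nat assume n1: "n \<ge> 1"
  define x where "x = real n powr (1 / (real m - 1))"
  have mr: "real m - 1 = real (m - 1)" using assms(1) by simp
  have x1: "1 \<le> x" unfolding x_def using n1 assms(1) by (intro ge_one_powr_ge_zero) auto
  define t where "t = nat \<lfloor>x\<rfloor>"
  have fl: "1 \<le> \<lfloor>x\<rfloor>" using x1 by simp
  have t1: "1 \<le> t" unfolding t_def using fl by (simp add: le_nat_iff)
  have tx: "real t \<le> x" using fl by (simp add: t_def)
  have xt: "x - 1 < real t" using fl by (simp add: t_def)
  have "x ^ (m-1) = x powr real (m-1)" using x1 by (simp add: powr_realpow)
  also have "\<dots> = real n powr (1 / (real m - 1) * real (m-1))" by (simp add: x_def powr_powr)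
  also have "\<dots> = real n" using mr assms(1) n1 by simp
  finally have xp: "x ^ (m-1) = real n" .
  have "real (t^(m-1)) \<le> x^(m-1)" unfolding of_nat_power by (rule power_mono[OF tx]) simp
  hence tn: "t^(m-1) \<le> n" using xp by simp
  have "t \<le> h_rmf 2 n m f" by (rule bound_h[OF assms(1) t1 tn assms(2)])
  moreover have "x / 2 < real t" using xt t1 by linarith
  ultimately show "1/2 * real n powr (1 / (real m - 1)) < real (h_rmf 2 n m f)"
    unfolding x_def[symmetric] by linarith
qed (simp)

end
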